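(* Let $E$ be a metrizable locally solid vector lattice which is an ideal in its topological completion $\widehat E$. Then $E$ has the countable sup property if and only if $\widehat E$ has the countable sup property.
   Context: A locally solid vector lattice is an (Archimedean) vector lattice with a linear topology having a base of zero neighborhoods consisting of solid sets; its topological completion $\widehat E$ is the completion of the topological vector space $E$, which is again a locally solid vector lattice containing $E$ as a dense vector sublattice. A vector lattice has the countable sup property if every nonempty subset possessing a supremum contains a countable subset with the same supremum. *)

theory Defs
  imports "HOL-Analysis.Analysis"
begin

text \<open>Vector lattices are modelled by the type class combination
  ordered_real_vector + lattice (an ordered real vector space whose order is a lattice).\<close>

definition labs :: "'a::{ordered_real_vector,lattice} \<Rightarrow> 'a" where
  "labs x = sup x (- x)"

definition archimedean_vl :: "'a::{ordered_real_vector,lattice} itself \<Rightarrow> bool" where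
  "archimedean_vl _ \<longleftrightarrow>
     (\<forall>x y::'a. 0 \<le> x \<and> (\<forall>n::nat. real n *\<^sub>R x \<le> y) \<longrightarrow> x = 0)"

definition solid_set :: "'a::{ordered_real_vector,lattice} set \<Rightarrow> bool" where
  "solid_set V \<longleftrightarrow> (\<forall>x\<in>V. \<forall>y. labs y \<le> labs x \<longrightarrow> y \<in> V)"

definition linear_topology :: "'a::real_vector topology \<Rightarrow> bool" where
  "linear_topology \<tau> \<longleftrightarrow> topspace \<tau> = UNIV
     \<and> continuous_map (prod_topology \<tau> \<tau>) \<tau> (\<lambda>(x, y). x + y)
     \<and> continuous_map (prod_topology euclideanreal \<tau>) \<tau> (\<lambda>(a, x). a *\<^sub>R x)"

definition zero_nhd :: "'a::real_vector topology \<Rightarrow> 'a set \<Rightarrow> bool" where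
  "zero_nhd \<tau> V \<longleftrightarrow> (\<exists>W. openin \<tau> W \<and> 0 \<in> W \<and> W \<subseteq> V)"

definition locally_solid :: "'a::{ordered_real_vector,lattice} topology \<Rightarrow> bool" where
  "locally_solid \<tau> \<longleftrightarrow> linear_topology \<tau> \<and>
     (\<forall>U. zero_nhd \<tau> U \<longrightarrow> (\<exists>V. zero_nhd \<tau> V \<and> solid_set V \<and> V \<subseteq> U))"

definition locally_solid_vector_lattice :: "'a::{ordered_real_vector,lattice} topology \<Rightarrow> bool" where
  "locally_solid_vector_lattice \<tau> \<longleftrightarrow> archimedean_vl TYPE('a) \<and> locally_solid \<tau>"

definition tvs_cauchy :: "'a::real_vector topology \<Rightarrow> 'a filter \<Rightarrow> bool" where
  "tvs_cauchy \<tau> F \<longleftrightarrow> F \<noteq> bot \<and>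
     (\<forall>U. zero_nhd \<tau> U \<longrightarrow> (\<exists>A. eventually (\<lambda>x. x \<in> A) F \<and> (\<forall>x\<in>A. \<forall>y\<in>A. x - y \<in> U)))"

definition tvs_complete :: "'a::real_vector topology \<Rightarrow> bool" where
  "tvs_complete \<tau> \<longleftrightarrow> (\<forall>F. tvs_cauchy \<tau> F \<longrightarrow> (\<exists>x. limitin \<tau> (\<lambda>z. z) x F))"

definition vector_sublattice :: "'a::{ordered_real_vector,lattice} set \<Rightarrow> bool" where
  "vector_sublattice E \<longleftrightarrow> subspace E \<and> (\<forall>x\<in>E. \<forall>y\<in>E. sup x y \<in> E \<and> inf x y \<in> E)"

definition order_ideal :: "'a::{ordered_real_vector,lattice} set \<Rightarrow> bool" where
  "order_ideal E \<longleftrightarrow> subspace E \<and> solid_set E"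

definition is_sup_in :: "'a::order set \<Rightarrow> 'a set \<Rightarrow> 'a \<Rightarrow> bool" where
  "is_sup_in S A s \<longleftrightarrow> s \<in> S \<and> (\<forall>a\<in>A. a \<le> s) \<and> (\<forall>u\<in>S. (\<forall>a\<in>A. a \<le> u) \<longrightarrow> s \<le> u)"

definition countable_sup_property :: "'a::order set \<Rightarrow> bool" where
  "countable_sup_property S \<longleftrightarrow>
     (\<forall>A s. A \<subseteq> S \<and> A \<noteq> {} \<and> is_sup_in S A s \<longrightarrow>
        (\<exists>B. B \<subseteq> A \<and> countable B \<and> is_sup_in S B s))"

end

theory Submission
  imports Defs "HOL-Library.Lattice_Algebras"
begin

lemma lag: "class.lattice_ab_group_add (+) (0::'a::{ordered_real_vector,lattice}) (-) uminus (\<le>) (<) inf sup"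
  by unfold_locales (auto intro: add_left_mono)

lemma vl_add_eq_inf_sup: "(a::'a::{ordered_real_vector,lattice}) + b = sup a b + inf a b"
  by (rule lattice_ab_group_add.add_eq_inf_sup[OF lag])

lemma vl_neg_inf: "- inf (a::'a::{ordered_real_vector,lattice}) b = sup (- a) (- b)"
  by (rule lattice_ab_group_add.neg_inf_eq_sup[OF lag])

lemma lag2: "class.semilattice_sup_ab_group_add (+) (0::'a::{ordered_real_vector,lattice}) (-) uminus (\<le>) (<) sup"
  by unfold_locales (auto intro: add_left_mono)

lemma vl_add_sup: "(c::'a::{ordered_real_vector,lattice}) + sup a b = sup (c + a) (c + b)"
  by (rule semilattice_sup_ab_group_add.add_sup_distrib_left[OF lag2])

lemma labs_ge: "(x::'a::{ordered_real_vector,lattice}) \<le> labs x" "- x \<le> labs x"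
  by (auto simp: labs_def)

lemma labs_nonneg: "0 \<le> labs (x::'a::{ordered_real_vector,lattice})"
proof -
  have "x + - x \<le> labs x + labs x" by (intro add_mono labs_ge)
  hence h: "0 \<le> 2 *\<^sub>R labs x" by (simp add: scaleR_2)
  have "0 \<le> (1/2::real) *\<^sub>R (2 *\<^sub>R labs x)" by (rule scaleR_nonneg_nonneg[OF _ h]) simp
  also have "(1/2::real) *\<^sub>R (2 *\<^sub>R labs x) = labs x" by simp
  finally show ?thesis .
qed

lemma labs_pos: "0 \<le> (x::'a::{ordered_real_vector,lattice}) \<Longrightarrow> labs x = x"
  unfolding labs_def by (rule sup_absorb1) (meson neg_le_0_iff_le order_trans)

lemma labs_minus: "labs (- (x::'a::{ordered_real_vector,lattice})) = labs x"
  by (simp add: labs_def sup_commute)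

lemma solid_pos: "solid_set V \<Longrightarrow> x \<in> V \<Longrightarrow> 0 \<le> y \<Longrightarrow> y \<le> labs x \<Longrightarrow> y \<in> V"
  unfolding solid_set_def by (metis labs_pos)

lemma ideal_sup:
  fixes E :: "'a::{ordered_real_vector,lattice} set"
  assumes "order_ideal E" "A \<subseteq> E" "A \<noteq> {}" "is_sup_in E A s"
  shows "is_sup_in UNIV A s"
proof -
  from assms(4) have sE: "s \<in> E" and ub: "\<forall>a\<in>A. a \<le> s" and lub: "\<forall>u\<in>E. (\<forall>a\<in>A. a \<le> u) \<longrightarrow> s \<le> u"
    by (auto simp: is_sup_in_def)
  obtain a0 where a0: "a0 \<in> A" using assms(3) by auto
  have a0E: "a0 \<in> E" using a0 assms(2) by auto
  have sub: "subspace E" and sol: "solid_set E" using assms(1) by (auto simp: order_ideal_def)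
  show ?thesis unfolding is_sup_in_def
  proof (intro conjI ballI impI)
    fix u assume uu: "\<forall>a\<in>A. a \<le> u"
    define w where "w = inf u s"
    have "a0 \<le> w" unfolding w_def using uu ub a0 by (intro le_infI) auto
    hence w0: "0 \<le> w - a0" by simp
    have "w - a0 \<le> s - a0" unfolding w_def by (intro diff_right_mono) simp
    hence "w - a0 \<le> labs (s - a0)" using w0 by (simp add: labs_pos)
    moreover have "s - a0 \<in> E" using sub sE a0E by (simp add: subspace_diff)
    ultimately have "w - a0 \<in> E" using solid_pos[OF sol _ w0] by blast
    hence wE: "w \<in> E" using subspace_add[OF sub \<open>w - a0 \<in> E\<close> a0E] by simp
    have "\<forall>a\<in>A. a \<le> w" unfolding w_def using uu ub by (intro ballI le_infI) auto
    hence "s \<le> w" using lub wE by blast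
    thus "s \<le> u" unfolding w_def using le_infE by blast
  qed (use ub in auto)
qed


lemma lt_affine:
  assumes "linear_topology \<tau>"
  shows "continuous_map \<tau> \<tau> (\<lambda>x. p + r *\<^sub>R x)"
proof -
  have top: "topspace \<tau> = UNIV" and ad: "continuous_map (prod_topology \<tau> \<tau>) \<tau> (\<lambda>(x, y). x + y)"
    and sc: "continuous_map (prod_topology euclideanreal \<tau>) \<tau> (\<lambda>(a, x). a *\<^sub>R x)"
    using assms(1) unfolding linear_topology_def by blast+
  have "continuous_map \<tau> (prod_topology euclideanreal \<tau>) (\<lambda>x. (r, x))"
    by (intro continuous_map_pairedI continuous_map_id[unfolded id_def] continuous_map_const[THEN iffD2]) auto
  from continuous_map_compose[OF this sc] have s1: "continuous_map \<tau> \<tau> (\<lambda>x. r *\<^sub>R x)"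
    by (simp add: o_def)
  have "continuous_map \<tau> (prod_topology \<tau> \<tau>) (\<lambda>x. (p, r *\<^sub>R x))"
    by (intro continuous_map_pairedI s1 continuous_map_const[THEN iffD2]) (auto simp: top)
  from continuous_map_compose[OF this ad] show ?thesis by (simp add: o_def)
qed

lemma lt_open_pre:
  assumes "linear_topology \<tau>" "openin \<tau> Q"
  shows "openin \<tau> {x. p + r *\<^sub>R x \<in> Q}"
proof -
  have top: "topspace \<tau> = UNIV" using assms by (auto simp: linear_topology_def)
  from openin_continuous_map_preimage[OF lt_affine[OF assms(1)] assms(2)]
  show ?thesis by (simp add: top)
qed

lemma lt_add0:
  assumes "linear_topology \<tau>" "openin \<tau> W" "0 \<in> W"
  shows "\<exists>W2 W3. openin \<tau> W2 \<and> openin \<tau> W3 \<and> 0 \<in> W2 \<and> 0 \<in> W3 \<and> (\<forall>a\<in>W2. \<forall>b\<in>W3. a + b \<in> W)"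
proof -
  have top: "topspace \<tau> = UNIV" and ad: "continuous_map (prod_topology \<tau> \<tau>) \<tau> (\<lambda>(x, y). x + y)"
    using assms(1) unfolding linear_topology_def by blast+
  from openin_continuous_map_preimage[OF ad assms(2)]
  have "openin (prod_topology \<tau> \<tau>) {z. (\<lambda>(x, y). x + y) z \<in> W}" by (simp only: topspace_prod_topology top UNIV_Times_UNIV Int_UNIV_left mem_Collect_eq UNIV_I simp_thms)
  hence H: "\<forall>x y. (x,y) \<in> {z. (\<lambda>(x, y). x + y) z \<in> W} \<longrightarrow> (\<exists>U V. openin \<tau> U \<and> openin \<tau> V \<and> x \<in> U \<and> y \<in> V \<and> U \<times> V \<subseteq> {z. (\<lambda>(x, y). x + y) z \<in> W})"
    by (simp only: openin_prod_topology_alt)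
  have "(0,0) \<in> {z. (\<lambda>(x, y). x + y) z \<in> W}" using assms(3) by simp
  from H[rule_format, OF this] obtain U V where UV: "openin \<tau> U" "openin \<tau> V" "0 \<in> U" "0 \<in> V"
      "U \<times> V \<subseteq> {z. (\<lambda>(x, y). x + y) z \<in> W}"
    by blast
  have sumW: "\<forall>a\<in>U. \<forall>b\<in>V. a + b \<in> W"
  proof (intro ballI)
    fix a b assume "a \<in> U" "b \<in> V"
    hence "(a, b) \<in> U \<times> V" by (rule SigmaI)
    hence "(a, b) \<in> {z. (\<lambda>(x, y). x + y) z \<in> W}" using UV(5) by (rule rev_subsetD)
    thus "a + b \<in> W" by simp
  qed
  show ?thesis using UV(1-4) sumW by blast
qed

lemma dense_meet:
  assumes "\<tau> closure_of E = UNIV" "openin \<tau> T" "x \<in> T"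
  shows "\<exists>z\<in>E. z \<in> T"
  using assms unfolding in_closure_of[symmetric] by (metis UNIV_I in_closure_of)

lemma countable_base:
  fixes \<tau> :: "'a::real_vector topology"
  assumes lt: "linear_topology \<tau>" and dn: "\<tau> closure_of E = UNIV"
    and mt: "metrizable_space (subtopology \<tau> E)" and E0: "0 \<in> E"
  shows "\<exists>\<O>. countable \<O> \<and> (\<forall>Q\<in>\<O>. openin \<tau> Q \<and> 0 \<in> Q) \<and>
     (\<forall>W. openin \<tau> W \<and> 0 \<in> W \<longrightarrow> (\<exists>Q\<in>\<O>. Q \<subseteq> W))"
proof -
  have top: "topspace \<tau> = UNIV" using lt by (auto simp: linear_topology_def)
  have "first_countable (subtopology \<tau> E)" using mt by (rule metrizable_imp_first_countable)
  then obtain \<B> where Bc: "countable \<B>" and Bo: "\<forall>V\<in>\<B>. openin (subtopology \<tau> E) V"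
    and Bb: "\<forall>U. openin (subtopology \<tau> E) U \<and> 0 \<in> U \<longrightarrow> (\<exists>V\<in>\<B>. 0 \<in> V \<and> V \<subseteq> U)"
    unfolding first_countable_def using E0 top by (auto simp: topspace_subtopology)
  have "\<forall>V\<in>\<B>. \<exists>Q. openin \<tau> Q \<and> V = Q \<inter> E" using Bo by (simp add: openin_subtopology)
  then obtain Og where Og: "\<forall>V\<in>\<B>. openin \<tau> (Og V) \<and> V = Og V \<inter> E" by metis
  define \<O> where "\<O> = Og ` {V\<in>\<B>. 0 \<in> V}"
  show ?thesis
  proof (intro exI conjI allI impI ballI)
    show "countable \<O>" unfolding \<O>_def using Bc by auto
    fix Q assume "Q \<in> \<O>"
    then show "openin \<tau> Q" "0 \<in> Q" unfolding \<O>_def using Og by auto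
  next
    fix W assume W: "openin \<tau> W \<and> 0 \<in> W"
    obtain W2 W3 where W23: "openin \<tau> W2" "openin \<tau> W3" "0 \<in> W2" "0 \<in> W3"
      "\<forall>a\<in>W2. \<forall>b\<in>W3. a + b \<in> W" using lt_add0[OF lt] W by metis
    have "openin (subtopology \<tau> E) (W2 \<inter> E)" using W23 by (auto simp: openin_subtopology)
    then obtain V where V: "V \<in> \<B>" "0 \<in> V" "V \<subseteq> W2 \<inter> E" using Bb E0 W23 by blast
    have "Og V \<subseteq> W"
    proof
      fix y assume y: "y \<in> Og V"
      have "openin \<tau> {z. y + (-1) *\<^sub>R z \<in> W3}" by (rule lt_open_pre[OF lt W23(2)])
      hence "openin \<tau> (Og V \<inter> {z. y + (-1) *\<^sub>R z \<in> W3})" using Og V by blast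
      moreover have "y \<in> Og V \<inter> {z. y + (-1) *\<^sub>R z \<in> W3}" using y W23 by simp
      ultimately obtain z where z: "z \<in> E" "z \<in> Og V" "y + (-1) *\<^sub>R z \<in> W3"
        using dense_meet[OF dn] by blast
      have "z \<in> V" using z Og V by blast
      hence "z \<in> W2" using V by blast
      hence "z + (y + (-1) *\<^sub>R z) \<in> W" using W23 z by blast
      thus "y \<in> W" by simp
    qed
    thus "\<exists>Q\<in>\<O>. Q \<subseteq> W" unfolding \<O>_def using V by blast
  qed
qed

lemma countable_approx:
  fixes \<tau> :: "'a::real_vector topology"
  assumes lt: "linear_topology \<tau>" and dn: "\<tau> closure_of E = UNIV"
    and mt: "metrizable_space (subtopology \<tau> E)" and E0: "0 \<in> E"
  shows "\<exists>S. countable S \<and> S \<subseteq> E \<and> (\<forall>W. openin \<tau> W \<and> 0 \<in> W \<longrightarrow> (\<exists>e\<in>S. e - c \<in> W))"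
proof -
  obtain \<O> where Oc: "countable \<O>" and Oo: "\<forall>Q\<in>\<O>. openin \<tau> Q \<and> 0 \<in> Q"
    and Ob: "\<forall>W. openin \<tau> W \<and> 0 \<in> W \<longrightarrow> (\<exists>Q\<in>\<O>. Q \<subseteq> W)"
    using countable_base[OF assms] by blast
  have "\<forall>Q\<in>\<O>. \<exists>z\<in>E. z \<in> {x. (- c) + 1 *\<^sub>R x \<in> Q}"
  proof
    fix Q assume Q: "Q \<in> \<O>"
    have "openin \<tau> {x. (- c) + 1 *\<^sub>R x \<in> Q}" by (rule lt_open_pre[OF lt]) (use Q Oo in auto)
    moreover have "c \<in> {x. (- c) + 1 *\<^sub>R x \<in> Q}" using Q Oo by simp
    ultimately show "\<exists>z\<in>E. z \<in> {x. (- c) + 1 *\<^sub>R x \<in> Q}" by (rule dense_meet[OF dn])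
  qed
  then obtain g where g: "\<forall>Q\<in>\<O>. g Q \<in> E \<and> g Q - c \<in> Q" by simp metis
  show ?thesis
  proof (intro exI conjI allI impI)
    show "countable (g ` \<O>)" using Oc by simp
    show "g ` \<O> \<subseteq> E" using g by auto
    fix W assume "openin \<tau> W \<and> 0 \<in> W"
    then obtain Q where "Q \<in> \<O>" "Q \<subseteq> W" using Ob by blast
    thus "\<exists>e\<in>g ` \<O>. e - c \<in> W" using g by blast
  qed
qed


lemma sup_restrict:
  "is_sup_in UNIV B s \<Longrightarrow> s \<in> E \<Longrightarrow> is_sup_in E B s"
  by (auto simp: is_sup_in_def)

lemma forward_dir:
  fixes E :: "'a::{ordered_real_vector,lattice} set"
  assumes "order_ideal E" "countable_sup_property (UNIV :: 'a set)"
  shows "countable_sup_property E"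
  unfolding countable_sup_property_def
proof (intro allI impI)
  fix A s assume h: "A \<subseteq> E \<and> A \<noteq> {} \<and> is_sup_in E A s"
  hence sE: "s \<in> E" by (simp add: is_sup_in_def)
  have "is_sup_in UNIV A s" using ideal_sup[OF assms(1)] h by blast
  then obtain B where "B \<subseteq> A" "countable B" "is_sup_in UNIV B s"
    using assms(2) h unfolding countable_sup_property_def by blast
  thus "\<exists>B\<subseteq>A. countable B \<and> is_sup_in E B s" using sup_restrict[OF _ sE] by blast
qed

lemma key_sup:
  fixes A :: "'a::{ordered_real_vector,lattice} set"
  assumes ub: "\<forall>a\<in>A. a \<le> s" and lub: "\<forall>u. (\<forall>a\<in>A. a \<le> u) \<longrightarrow> s \<le> u"
    and a0: "a0 \<in> A" and ec: "e \<le> s - a0"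
  shows "is_sup_in UNIV ((\<lambda>a. inf (sup a a0 - a0) e) ` A) e"
  unfolding is_sup_in_def
proof (intro conjI ballI impI)
  fix u assume uu: "\<forall>b\<in>(\<lambda>a. inf (sup a a0 - a0) e) ` A. b \<le> u"
  have "\<forall>a\<in>A. a \<le> s + u - e"
  proof
    fix a assume a: "a \<in> A"
    define y where "y = sup a a0 - a0"
    have "sup a a0 \<le> s" using ub a a0 by (intro sup_least) auto
    hence ys: "y \<le> s - a0" unfolding y_def by (rule diff_right_mono)
    hence sy: "sup y e \<le> s - a0" using ec by (rule sup_least)
    have iy: "inf y e \<le> u" using uu a unfolding y_def by blast
    have "y + e = sup y e + inf y e" by (rule vl_add_eq_inf_sup)
    also have "\<dots> \<le> (s - a0) + u" using sy iy by (rule add_mono)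
    finally have h1: "y + e \<le> (s - a0) + u" .
    have "sup a a0 = (y + e) + (a0 - e)" unfolding y_def by (simp add: algebra_simps)
    also have "\<dots> \<le> ((s - a0) + u) + (a0 - e)" using h1 by (rule add_right_mono)
    also have "\<dots> = s + u - e" by (simp add: algebra_simps)
    finally have "sup a a0 \<le> s + u - e" .
    thus "a \<le> s + u - e" using sup_ge1 order_trans by blast
  qed
  hence "s \<le> s + u - e" using lub by blast
  hence "s + (e - s) \<le> (s + u - e) + (e - s)" by (rule add_right_mono)
  thus "e \<le> u" by (simp add: algebra_simps)
qed auto


lemma backward_dir:
  fixes \<tau> :: "'b::{ordered_real_vector,lattice} topology"
    and E :: "'b set"
  assumes ls: "locally_solid \<tau>"
    and hs: "Hausdorff_space \<tau>"
    and dn: "\<tau> closure_of E = UNIV"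
    and mt: "metrizable_space (subtopology \<tau> E)"
    and idl: "order_ideal E"
    and hE: "countable_sup_property E"
  shows "countable_sup_property (UNIV :: 'b set)"
  unfolding countable_sup_property_def
proof (intro allI impI)
  fix A s assume hA: "A \<subseteq> (UNIV::'b set) \<and> A \<noteq> {} \<and> is_sup_in UNIV A s"
  have lt: "linear_topology \<tau>" and lsol: "\<forall>U. zero_nhd \<tau> U \<longrightarrow> (\<exists>V. zero_nhd \<tau> V \<and> solid_set V \<and> V \<subseteq> U)"
    using ls by (auto simp: locally_solid_def)
  have top: "topspace \<tau> = UNIV" using lt by (simp add: linear_topology_def)
  have sub: "subspace E" and sol: "solid_set E" using idl by (auto simp: order_ideal_def)
  have E0: "0 \<in> E" using sub by (rule subspace_0)
  obtain a0 where a0: "a0 \<in> A" using hA by auto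
  have ub: "\<forall>a\<in>A. a \<le> s" and lub: "\<forall>u. (\<forall>a\<in>A. a \<le> u) \<longrightarrow> s \<le> u"
    using hA by (auto simp: is_sup_in_def)
  define c where "c = s - a0"
  have c0: "0 \<le> c" unfolding c_def using ub a0 by simp
  define y where "y a = sup a a0 - a0" for a
  obtain S0 where S0c: "countable S0" and S0E: "S0 \<subseteq> E"
    and S0a: "\<forall>W. openin \<tau> W \<and> 0 \<in> W \<longrightarrow> (\<exists>e\<in>S0. e - c \<in> W)"
    using countable_approx[OF lt dn mt E0] by blast
  define f where "f e' = inf (sup e' 0) c" for e'
  have f0: "0 \<le> f e'" for e' unfolding f_def using c0 by simp
  have fc: "f e' \<le> c" for e' unfolding f_def by simp
  have fE: "f e' \<in> E" if "e' \<in> E" for e'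
  proof -
    have "f e' \<le> sup e' 0" unfolding f_def by simp
    also have "sup e' 0 \<le> labs e'" by (rule sup_least[OF labs_ge(1) labs_nonneg])
    finally show ?thesis using solid_pos[OF sol that f0] by blast
  qed
  have "\<forall>e'\<in>S0. \<exists>A'. countable A' \<and> A' \<subseteq> A \<and> is_sup_in UNIV ((\<lambda>a. inf (y a) (f e')) ` A') (f e')"
  proof
    fix e' assume e': "e' \<in> S0"
    define e where "e = f e'"
    have eE: "e \<in> E" using fE e' S0E unfolding e_def by blast
    have e0: "0 \<le> e" unfolding e_def by (rule f0)
    have su: "is_sup_in UNIV ((\<lambda>a. inf (y a) e) ` A) e"
      unfolding y_def using key_sup[OF ub lub a0] fc unfolding e_def c_def by blast
    have YE: "(\<lambda>a. inf (y a) e) ` A \<subseteq> E"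
    proof
      fix b assume "b \<in> (\<lambda>a. inf (y a) e) ` A"
      then obtain a where b: "b = inf (y a) e" by blast
      have "0 \<le> y a" unfolding y_def by simp
      hence "0 \<le> b" using e0 b by simp
      moreover have "b \<le> labs e" using b labs_pos[OF e0] by simp
      ultimately show "b \<in> E" using solid_pos[OF sol eE] by blast
    qed
    have "is_sup_in E ((\<lambda>a. inf (y a) e) ` A) e" using sup_restrict[OF su eE] .
    moreover have "(\<lambda>a. inf (y a) e) ` A \<noteq> {}" using a0 by blast
    ultimately obtain B where B: "B \<subseteq> (\<lambda>a. inf (y a) e) ` A" "countable B" "is_sup_in E B e"
      using hE YE unfolding countable_sup_property_def by blast
    define B' where "B' = insert (inf (y a0) e) B"
    have B'1: "B' \<subseteq> (\<lambda>a. inf (y a) e) ` A" using B a0 unfolding B'_def by blast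
    have B'2: "countable B'" using B unfolding B'_def by simp
    have "is_sup_in E B' e" using B(3) unfolding B'_def is_sup_in_def by auto
    hence "is_sup_in UNIV B' e" using ideal_sup[OF idl] B'1 YE unfolding B'_def by blast
    moreover obtain A' where "countable A'" "A' \<subseteq> A" "B' = (\<lambda>a. inf (y a) e) ` A'"
      using countable_subset_image[THEN iffD1, OF conjI[OF B'2 B'1]] by blast
    ultimately show "\<exists>A'. countable A' \<and> A' \<subseteq> A \<and> is_sup_in UNIV ((\<lambda>a. inf (y a) (f e')) ` A') (f e')"
      unfolding e_def by blast
  qed
  then obtain G where G: "\<forall>e'\<in>S0. countable (G e') \<and> G e' \<subseteq> A \<and>
      is_sup_in UNIV ((\<lambda>a. inf (y a) (f e')) ` G e') (f e')" by metis
  define AA where "AA = insert a0 (\<Union> (G ` S0))"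
  show "\<exists>B\<subseteq>A. countable B \<and> is_sup_in UNIV B s"
  proof (intro exI conjI)
    show "AA \<subseteq> A" unfolding AA_def using G a0 by blast
    show "countable AA" unfolding AA_def using G S0c by auto
    show "is_sup_in UNIV AA s" unfolding is_sup_in_def
    proof (intro conjI ballI impI)
      show "a \<le> s" if "a \<in> AA" for a using that \<open>AA \<subseteq> A\<close> ub by blast
    next
      fix u assume uu: "\<forall>a\<in>AA. a \<le> u"
      have a0u: "a0 \<le> u" using uu unfolding AA_def by blast
      define v where "v = u - a0"
      have fv: "f e' \<le> v" if e': "e' \<in> S0" for e'
      proof -
        have "\<forall>b\<in>(\<lambda>a. inf (y a) (f e')) ` G e'. b \<le> v"
        proof
          fix b assume "b \<in> (\<lambda>a. inf (y a) (f e')) ` G e'"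
          then obtain a where a: "a \<in> G e'" "b = inf (y a) (f e')" by blast
          have "a \<le> u" using uu a e' unfolding AA_def by blast
          hence "sup a a0 \<le> u" using a0u by simp
          hence "y a \<le> v" unfolding y_def v_def by (rule diff_right_mono)
          thus "b \<le> v" using a le_infI1 by blast
        qed
        thus ?thesis using G e' unfolding is_sup_in_def by blast
      qed
      define x where "x = c - inf c v"
      have x0: "0 \<le> x" unfolding x_def by simp
      have "x = 0"
      proof (rule ccontr)
        assume "x \<noteq> 0"
        then obtain U1 U2 where U: "openin \<tau> U1" "openin \<tau> U2" "x \<in> U1" "0 \<in> U2" "disjnt U1 U2"
          using hs unfolding Hausdorff_space_def top by blast
        have "zero_nhd \<tau> U2" unfolding zero_nhd_def using U by blast
        then obtain Vs where Vs: "zero_nhd \<tau> Vs" "solid_set Vs" "Vs \<subseteq> U2" using lsol by blast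
        then obtain W where W: "openin \<tau> W" "0 \<in> W" "W \<subseteq> Vs" unfolding zero_nhd_def by blast
        then obtain e' where e': "e' \<in> S0" "e' - c \<in> W" using S0a by blast
        have "e' - c \<in> Vs" using e' W by blast
        moreover have "labs (c - e') \<le> labs (e' - c)"
          using labs_minus[of "e' - c"] by simp
        ultimately have ce: "c - e' \<in> Vs" using Vs(2) unfolding solid_set_def by blast
        have "f e' \<le> inf c v" using fc fv[OF e'(1)] by simp
        hence "x \<le> c - f e'" unfolding x_def by (rule diff_left_mono)
        also have "c - f e' = sup (c - sup e' 0) 0"
        proof -
          have "c - f e' = c + sup (- sup e' 0) (- c)" unfolding f_def using vl_neg_inf by simp
          also have "\<dots> = sup (c + - sup e' 0) (c + - c)" by (rule vl_add_sup)
          finally show ?thesis by simp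
        qed
        also have "\<dots> \<le> labs (c - e')"
        proof (rule sup_least)
          have "c - sup e' 0 \<le> c - e'" by (rule diff_left_mono) simp
          thus "c - sup e' 0 \<le> labs (c - e')" using labs_ge(1) order_trans by blast
        qed (rule labs_nonneg)
        finally have "x \<in> Vs" using solid_pos[OF Vs(2) ce x0] by blast
        thus False using U Vs(3) by (auto simp: disjnt_def)
      qed
      hence "c \<le> v" unfolding x_def by (metis eq_iff_diff_eq_0 inf.absorb_iff1)
      thus "s \<le> u" unfolding c_def v_def by simp
    qed simp
  qed
qed


theorem theorem5p9:
  fixes \<tau> :: "'b::{ordered_real_vector,lattice} topology"
    and E :: "'b set"
  assumes completion_lsvl: "locally_solid_vector_lattice \<tau>"
    and completion_hausdorff: "Hausdorff_space \<tau>"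
    and completion_complete: "tvs_complete \<tau>"
    and E_sublattice: "vector_sublattice E"
    and E_dense: "\<tau> closure_of E = UNIV"
    and E_metrizable: "metrizable_space (subtopology \<tau> E)"
    and E_ideal: "order_ideal E"
  shows "countable_sup_property E \<longleftrightarrow> countable_sup_property (UNIV :: 'b set)"
proof
  assume "countable_sup_property E"
  thus "countable_sup_property (UNIV :: 'b set)"
    using backward_dir[OF _ completion_hausdorff E_dense E_metrizable E_ideal] completion_lsvl
    by (auto simp: locally_solid_vector_lattice_def)
next
  assume "countable_sup_property (UNIV :: 'b set)"
  thus "countable_sup_property E" using forward_dir[OF E_ideal] by blast
qed

end
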